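(* Let $K\ge L\ge T\ge 2$ be integers, let $\kappa,\lambda$ be the smallest non-negative integers such that $K+1+\kappa$ and $L+1+\lambda$ are coprime to $T-1$, and put $K^\star=K+1+\kappa$, $L^\star=L+1+\lambda$, $\bar T=T-1$, $q=K^\star L^\star+\bar T^2$. Then $K^\star$, $L^\star$ and $\bar T$ are each coprime to $q$. Moreover, for every integer $x$ coprime to $q$ there exists a unique integer $y\in\{0,\dots,q-1\}$ with $x\bar T+yK^\star\equiv 0\pmod q$, and this $y$ is coprime to $q$. *)

theory Defs
  imports Main "HOL-Number_Theory.Cong"
begin

definition shift_coprime :: "int \<Rightarrow> int \<Rightarrow> nat" where
  "shift_coprime K T = (LEAST k::nat. coprime (K + 1 + int k) (T - 1))"

end

theory Submission
  imports Defs
begin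

lemma cop_aux: "coprime (a::int) (a * b + c) \<longleftrightarrow> coprime a c"
  using gcd_add_mult[of a b c] by (simp add: coprime_iff_gcd_eq_1 mult.commute)

lemma shift_ok:
  fixes K T :: int
  assumes "T \<ge> 2"
  shows "coprime (K + 1 + int (shift_coprime K T)) (T - 1)"
proof -
  define m where "m = T - 1"
  have m: "m > 0" using assms by (simp add: m_def)
  define k where "k = nat ((-K) mod m)"
  have "int k = (-K) mod m" using m by (simp add: k_def)
  moreover have "-K = m * ((-K) div m) + (-K) mod m" by simp
  ultimately have e: "K + 1 + int k = m * (- ((-K) div m)) + 1" by linarith
  have "coprime m (m * (- ((-K) div m)) + 1)"
    by (subst cop_aux) simp
  hence "coprime (K + 1 + int k) (T - 1)"
    using e by (metis m_def coprime_commute)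
  hence "\<exists>k::nat. coprime (K + 1 + int k) (T - 1)" by blast
  from LeastI_ex[OF this] show ?thesis by (simp add: shift_coprime_def)
qed

lemma shift_nonneg: "K + 1 + int (shift_coprime K T) \<ge> K + 1" by simp

theorem claim1:
  fixes K L T :: int
  assumes "K \<ge> L" and "L \<ge> T" and "T \<ge> 2"
  defines "Ks \<equiv> K + 1 + int (shift_coprime K T)"
      and "Ls \<equiv> L + 1 + int (shift_coprime L T)"
      and "Tb \<equiv> T - 1"
      and "q \<equiv> (K + 1 + int (shift_coprime K T)) * (L + 1 + int (shift_coprime L T)) + (T - 1) ^ 2"
  shows "coprime Ks q \<and> coprime Ls q \<and> coprime Tb q \<and>
         (\<forall>x::int. coprime x q \<longrightarrow>
            (\<exists>!y::int. y \<in> {0..q - 1} \<and> [x * Tb + y * Ks = 0] (mod q)) \<and>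
            (\<forall>y::int. y \<in> {0..q - 1} \<and> [x * Tb + y * Ks = 0] (mod q) \<longrightarrow> coprime y q))"
proof -
  have q: "q = Ks * Ls + Tb ^ 2" by (simp add: q_def Ks_def Ls_def Tb_def)
  have cK: "coprime Ks Tb" using shift_ok[OF assms(3), of K] by (simp add: Ks_def Tb_def)
  have cL: "coprime Ls Tb" using shift_ok[OF assms(3), of L] by (simp add: Ls_def Tb_def)
  have Kp: "Ks > 0" using assms shift_nonneg[of K T] by (simp add: Ks_def)
  have Lp: "Ls > 0" using assms shift_nonneg[of L T] by (simp add: Ls_def)
  have qp: "q > 0" using Kp Lp q by (simp add: add_pos_nonneg)
  have c1: "coprime Ks q" unfolding q using cop_aux[of Ks Ls "Tb^2"] cK by simp
  have c2: "coprime Ls q" unfolding q using cop_aux[of Ls Ks "Tb^2"] cL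
    by (simp add: mult.commute)
  have "coprime Tb (Tb * Tb + Ks * Ls)" using cop_aux[of Tb Tb "Ks*Ls"] cK cL
    by (simp add: coprime_commute)
  hence c3: "coprime Tb q" unfolding q by (simp add: power2_eq_square add.commute)
  have rest: "(\<exists>!y::int. y \<in> {0..q - 1} \<and> [x * Tb + y * Ks = 0] (mod q)) \<and>
            (\<forall>y::int. y \<in> {0..q - 1} \<and> [x * Tb + y * Ks = 0] (mod q) \<longrightarrow> coprime y q)"
    if cx: "coprime x q" for x
  proof (intro conjI allI impI)
    obtain u where u: "[Ks * u = 1] (mod q)" using cong_solve_coprime_int[OF c1] by blast
    define y0 where "y0 = (- x * Tb * u) mod q"
    have "[y0 * Ks = - x * Tb * u * Ks] (mod q)" unfolding y0_def
      by (simp add: cong_def mod_mult_left_eq)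
    moreover have "[- x * Tb * u * Ks = - x * Tb * 1] (mod q)"
      using cong_scalar_left[OF u, of "- x * Tb"] by (simp add: ac_simps)
    ultimately have "[y0 * Ks = - x * Tb] (mod q)" using cong_trans by fastforce
    hence "[x * Tb + y0 * Ks = x * Tb + - x * Tb] (mod q)" using cong_add_lcancel by blast
    hence h0: "[x * Tb + y0 * Ks = 0] (mod q)" by simp
    have r0: "y0 \<in> {0..q - 1}" using qp unfolding y0_def
      by (simp add: pos_mod_bound pos_mod_sign)
    show "\<exists>!y::int. y \<in> {0..q - 1} \<and> [x * Tb + y * Ks = 0] (mod q)"
    proof (rule ex1I[of _ y0])
      show "y0 \<in> {0..q - 1} \<and> [x * Tb + y0 * Ks = 0] (mod q)" using r0 h0 by blast
    next
      fix y assume y: "y \<in> {0..q - 1} \<and> [x * Tb + y * Ks = 0] (mod q)"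
      hence "[x * Tb + y * Ks = x * Tb + y0 * Ks] (mod q)" using h0 cong_sym cong_trans by blast
      hence "[y * Ks = y0 * Ks] (mod q)" using cong_add_lcancel by blast
      hence "[y = y0] (mod q)" using cong_mult_rcancel[OF c1] by blast
      thus "y = y0" using y r0 by (intro cong_less_imp_eq_int) auto
    qed
  next
    fix y assume y: "y \<in> {0..q - 1} \<and> [x * Tb + y * Ks = 0] (mod q)"
    hence dq: "q dvd x * Tb + y * Ks" by (simp add: cong_0_iff)
    show "coprime y q"
    proof (rule coprimeI)
      fix d assume d1: "d dvd y" and d2: "d dvd q"
      have "d dvd x * Tb + y * Ks" using d2 dq dvd_trans by blast
      moreover have "d dvd y * Ks" using d1 by simp
      ultimately have "d dvd x * Tb" using dvd_add_right_iff by (metis add.commute dvd_add_left_iff)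
      moreover have "coprime (x * Tb) q" using cx c3 by (simp add: coprime_commute)
      ultimately show "is_unit d" using d2 coprime_common_divisor by blast
    qed
  qed
  show ?thesis using c1 c2 c3 rest by blast
qed

end
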